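(* In the setting described in the context, fix $x^*\in X^*$, choose an initial point $x_0$, target accuracy $0<\epsilon\leq2\|x_0-x^*\|_L^2$, confidence $0<\rho<1$, and $$k\geq\frac{4n\|x_0-x^*\|_L^2}{\epsilon}\log\left(\frac{2(F(x_0)-F^* )}{\rho\epsilon}\right).$$ Let $F_\mu(x)=F(x)+\frac\mu2\|x-x_0\|_L^2$ with $\mu=\frac{\epsilon}{\|x_0-x^*\|_L^2}$, viewed as the composite function $f+\Psi_\mu$ with $\Psi_\mu(x)=\Psi(x)+\frac\mu2\|x-x_0\|_L^2$. If $x_k$ is the random point generated by UCDC$(x_0)$ applied to $F_\mu$, then $\mathbf{P}(F(x_k)-F^*\leq\epsilon)\geq1-\rho$.
   Context: Let $U\in\mathbf{R}^{N\times N}$ be a column permutation of the $N\times N$ identity matrix, partitioned as $U=[U_1,\dots,U_n]$ with $U_i\in\mathbf{R}^{N\times N_i}$, $\sum_iN_i=N$. For $x\in\mathbf{R}^N$ write $x^{(i)}=U_i^Tx$. Each $\mathbf{R}^{N_i}$ carries the norm $\|t\|_{(i)}=\langle B_it,t\rangle^{1/2}$ and dual norm $\|t\|_{(i)}^*=\langle B_i^{-1}t,t\rangle^{1/2}$ with $B_i$ positive definite. Consider $F(x)=f(x)+\Psi(x)$ on $\mathbf{R}^N$, where $f$ is convex and differentiable with $\|\nabla_if(x+U_it)-\nabla_if(x)\|_{(i)}^*\leq L_i\|t\|_{(i)}$ for all $x,t,i$ (constants $L_i>0$, $\nabla_if(x)=U_i^T\nabla f(x)$), and $\Psi(x)=\sum_i\Psi_i(x^{(i)})$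 with each $\Psi_i$ proper closed convex. $F$ has a minimizer; $F^*$ is the minimum value and $X^*$ the set of minimizers. $\|x\|_L=(\sum_iL_i\|x^{(i)}\|_{(i)}^2)^{1/2}$. For a composite function $f+\Phi$ with $\Phi(x)=\sum_i\Phi_i(x^{(i)})$ block separable, UCDC$(x_0)$ is: for $k=0,1,2,\dots$, choose $i\in\{1,\dots,n\}$ uniformly at random (independently), compute $T^{(i)}(x_k)=\arg\min_{t\in\mathbf{R}^{N_i}}\{\langle\nabla_if(x_k),t\rangle+\frac{L_i}{2}\|t\|_{(i)}^2+\Phi_i(x_k^{(i)}+t)\}$ and set $x_{k+1}=x_k+U_iT^{(i)}(x_k)$. *)

theory Defs
  imports "HOL-Analysis.Analysis" "HOL-Probability.Probability"
begin

text \<open>The coordinate set of R^N is the finite type 'n. The column permutation U = [U_1,...,U_n]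
  is encoded by a partition of the coordinates into blocks S 0, ..., S (n-1) (block i consists of
  the coordinates picked out by U_i). A vector t of R^{N_i} is identified with the vector
  U_i t of R^N, i.e. with an element of blockspace (S i); x^(i) = U_i^T x corresponds to blk (S i) x.\<close>

definition block_partition :: "nat \<Rightarrow> (nat \<Rightarrow> 'n set) \<Rightarrow> bool" where
  "block_partition n S \<longleftrightarrow> (\<forall>i<n. \<forall>j<n. i \<noteq> j \<longrightarrow> S i \<inter> S j = {}) \<and> (\<Union>i<n. S i) = UNIV"

definition blockspace :: "'n set \<Rightarrow> (real^'n) set" where
  "blockspace S = {t. \<forall>j. j \<notin> S \<longrightarrow> t $ j = 0}"

definition blk :: "'n set \<Rightarrow> real^'n \<Rightarrow> real^'n" where
  "blk S x = (\<chi> j. if j \<in> S then x $ j else 0)"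

definition qform :: "real^'n^'n \<Rightarrow> 'n set \<Rightarrow> real^'n \<Rightarrow> real" where
  "qform B S t = (\<Sum>a\<in>S. \<Sum>b\<in>S. B $ a $ b * t $ a * t $ b)"

definition bnorm :: "real^'n^'n \<Rightarrow> 'n set \<Rightarrow> real^'n \<Rightarrow> real" where
  "bnorm B S t = sqrt (qform B S t)"

definition pos_def_on :: "'n set \<Rightarrow> real^'n^'n \<Rightarrow> bool" where
  "pos_def_on S B \<longleftrightarrow> (\<forall>a\<in>S. \<forall>b\<in>S. B $ a $ b = B $ b $ a)
     \<and> (\<forall>t\<in>blockspace S. t \<noteq> 0 \<longrightarrow> qform B S t > 0)"

definition inverse_on :: "'n set \<Rightarrow> real^'n^'n \<Rightarrow> real^'n^'n \<Rightarrow> bool" where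
  "inverse_on S B Bi \<longleftrightarrow> (\<forall>a\<in>S. \<forall>c\<in>S. (\<Sum>b\<in>S. B $ a $ b * Bi $ b $ c) = (if a = c then 1 else 0))"

definition proper_closed_convex_on :: "'n set \<Rightarrow> (real^'n \<Rightarrow> ereal) \<Rightarrow> bool" where
  "proper_closed_convex_on S \<phi> \<longleftrightarrow>
     (\<forall>t\<in>blockspace S. \<phi> t \<noteq> -\<infinity>) \<and> (\<exists>t\<in>blockspace S. \<phi> t \<noteq> \<infinity>)
     \<and> convex {(t, y::real). t \<in> blockspace S \<and> \<phi> t \<le> ereal y}
     \<and> closed {(t, y::real). t \<in> blockspace S \<and> \<phi> t \<le> ereal y}"

definition Lnorm :: "nat \<Rightarrow> (nat \<Rightarrow> 'n set) \<Rightarrow> (nat \<Rightarrow> real^'n^'n) \<Rightarrow> (nat \<Rightarrow> real) \<Rightarrow> real^'n \<Rightarrow> real" where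
  "Lnorm n S B L x = sqrt (\<Sum>i<n. L i * (bnorm (B i) (S i) (blk (S i) x))^2)"

text \<open>T^(i)(x) for the composite function f + \<Phi>, \<Phi>(x) = sum_i \<Phi>_i(x^(i)); gf is the gradient of f.\<close>
definition ucdc_T :: "(real^'n \<Rightarrow> real^'n) \<Rightarrow> (nat \<Rightarrow> real) \<Rightarrow> (nat \<Rightarrow> real^'n^'n) \<Rightarrow> (nat \<Rightarrow> 'n set)
    \<Rightarrow> (nat \<Rightarrow> real^'n \<Rightarrow> ereal) \<Rightarrow> nat \<Rightarrow> real^'n \<Rightarrow> real^'n" where
  "ucdc_T gf L B S \<Phi> i x =
     (let obj = (\<lambda>t. ereal (blk (S i) (gf x) \<bullet> t + L i / 2 * (bnorm (B i) (S i) t)^2)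
                     + \<Phi> i (blk (S i) x + t))
      in SOME t. t \<in> blockspace (S i) \<and> (\<forall>s\<in>blockspace (S i). obj t \<le> obj s))"

definition ucdc_step :: "(real^'n \<Rightarrow> real^'n) \<Rightarrow> (nat \<Rightarrow> real) \<Rightarrow> (nat \<Rightarrow> real^'n^'n) \<Rightarrow> (nat \<Rightarrow> 'n set)
    \<Rightarrow> (nat \<Rightarrow> real^'n \<Rightarrow> ereal) \<Rightarrow> real^'n \<Rightarrow> nat \<Rightarrow> real^'n" where
  "ucdc_step gf L B S \<Phi> x i = x + ucdc_T gf L B S \<Phi> i x"

definition ucdc_run :: "(real^'n \<Rightarrow> real^'n) \<Rightarrow> (nat \<Rightarrow> real) \<Rightarrow> (nat \<Rightarrow> real^'n^'n) \<Rightarrow> (nat \<Rightarrow> 'n set)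
    \<Rightarrow> (nat \<Rightarrow> real^'n \<Rightarrow> ereal) \<Rightarrow> real^'n \<Rightarrow> nat list \<Rightarrow> real^'n" where
  "ucdc_run gf L B S \<Phi> x0 is = foldl (ucdc_step gf L B S \<Phi>) x0 is"

text \<open>The law of (i_0,...,i_{k-1}): i.i.d. uniform on {0,...,n-1}.\<close>
definition choice_seqs :: "nat \<Rightarrow> nat \<Rightarrow> nat list set" where
  "choice_seqs n k = {is. length is = k \<and> set is \<subseteq> {..<n}}"

end

theory Submission
  imports Defs
begin


lemma blk_in: "blk T x \<in> blockspace T"
  by (simp add: blk_def blockspace_def)

lemma blk_id: "t \<in> blockspace T \<Longrightarrow> blk T t = t"
  by (auto simp: blk_def blockspace_def vec_eq_iff)

lemma blk_add: "blk T (x + y) = blk T x + blk T y"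
  by (simp add: blk_def vec_eq_iff)
lemma blk_diff: "blk T (x - y) = blk T x - blk T y"
  by (simp add: blk_def vec_eq_iff)
lemma blk_scale: "blk T (c *\<^sub>R x) = c *\<^sub>R blk T x"
  by (simp add: blk_def vec_eq_iff)

lemma blockspace_add: "a \<in> blockspace T \<Longrightarrow> b \<in> blockspace T \<Longrightarrow> a + b \<in> blockspace T"
  and blockspace_diff: "a \<in> blockspace T \<Longrightarrow> b \<in> blockspace T \<Longrightarrow> a - b \<in> blockspace T"
  and blockspace_scale: "a \<in> blockspace T \<Longrightarrow> c *\<^sub>R a \<in> blockspace T"
  and blockspace_zero: "0 \<in> blockspace T"
  by (auto simp: blockspace_def)

lemma inner_blk_left: "t \<in> blockspace T \<Longrightarrow> blk T g \<bullet> t = g \<bullet> t"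
  by (auto simp: blockspace_def blk_def inner_vec_def intro!: sum.cong)

lemma closed_blockspace_gen: "closed (blockspace T)"
proof -
  have "blockspace T = (\<Inter>j\<in>-T. (\<lambda>x. x $ j) -` {0})" by (auto simp: blockspace_def)
  then show ?thesis by (auto intro!: closed_INT closed_vimage_vec_nth)
qed

locale ucdc =
  fixes n :: nat and S :: "nat \<Rightarrow> 'n::finite set"
    and B Binv :: "nat \<Rightarrow> real^'n^'n" and L :: "nat \<Rightarrow> real"
    and f :: "real^'n \<Rightarrow> real" and gf :: "real^'n \<Rightarrow> real^'n"
    and \<Psi> :: "nat \<Rightarrow> real^'n \<Rightarrow> ereal"
  assumes part: "block_partition n S"
    and Bpd: "\<forall>i<n. pos_def_on (S i) (B i)"
    and Binv: "\<forall>i<n. inverse_on (S i) (B i) (Binv i)"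
    and Lpos: "\<forall>i<n. L i > 0"
    and fconv: "convex_on UNIV f"
    and fgrad: "\<forall>x. (f has_derivative (\<lambda>h. gf x \<bullet> h)) (at x)"
    and fLip: "\<forall>i<n. \<forall>x. \<forall>t\<in>blockspace (S i).
                 sqrt (qform (Binv i) (S i) (blk (S i) (gf (x + t)) - blk (S i) (gf x)))
                   \<le> L i * bnorm (B i) (S i) t"
    and \<Psi>pcc: "\<forall>i<n. proper_closed_convex_on (S i) (\<Psi> i)"
begin

lemma part_disj: "i < n \<Longrightarrow> i' < n \<Longrightarrow> i \<noteq> i' \<Longrightarrow> S i \<inter> S i' = {}"
  using part unfolding block_partition_def by simp

lemma part_cover: "\<exists>i<n. j \<in> S i"
proof -
  have "(\<Union>i<n. S i) = UNIV" using part unfolding block_partition_def by simp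
  then have "j \<in> (\<Union>i<n. S i)" by simp
  then show ?thesis by auto
qed

lemma part_sum: "(\<Sum>i<n. if j \<in> S i then c else 0) = (c::real)"
proof -
  obtain i0 where i0: "i0 < n" "j \<in> S i0" using part_cover by blast
  have u: "\<And>i. i < n \<Longrightarrow> j \<in> S i \<Longrightarrow> i = i0"
  proof (rule ccontr)
    fix i' assume "i' < n" "j \<in> S i'" "i' \<noteq> i0"
    then have "S i' \<inter> S i0 = {}" using part_disj i0 by simp
    then show False using i0 \<open>j \<in> S i'\<close> by blast
  qed
  have "(\<Sum>i<n. if j \<in> S i then c else 0) = (\<Sum>i<n. if i = i0 then c else 0)"
    using i0 u by (intro sum.cong refl) (metis lessThan_iff)
  also have "\<dots> = c" using i0 by simp
  finally show ?thesis .
qed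

lemma sum_blk: "(\<Sum>i<n. blk (S i) x) = x"
  by (simp add: vec_eq_iff sum_component blk_def part_sum)

lemma inner_blk_sum: "(\<Sum>i<n. blk (S i) g \<bullet> blk (S i) d) = g \<bullet> d"
proof -
  have "(\<Sum>i<n. blk (S i) g \<bullet> blk (S i) d) = (\<Sum>i<n. \<Sum>j\<in>UNIV. if j \<in> S i then g$j * d$j else 0)"
    by (simp add: inner_vec_def blk_def if_distrib cong: if_cong)
  also have "\<dots> = (\<Sum>j\<in>UNIV. \<Sum>i<n. if j \<in> S i then g$j * d$j else 0)"
    by (rule sum.swap)
  also have "\<dots> = g \<bullet> d" by (simp add: part_sum inner_vec_def)
  finally show ?thesis .
qed

lemma blk_other: "i < n \<Longrightarrow> j < n \<Longrightarrow> i \<noteq> j \<Longrightarrow> t \<in> blockspace (S i) \<Longrightarrow> blk (S j) t = 0"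
proof -
  assume a: "i < n" "j < n" "i \<noteq> j" "t \<in> blockspace (S i)"
  have "\<And>k. k \<in> S j \<Longrightarrow> t $ k = 0"
  proof -
    fix k assume "k \<in> S j"
    then have "k \<notin> S i" using part_disj[of i j] a by blast
    then show "t $ k = 0" using a(4) by (simp add: blockspace_def)
  qed
  then show ?thesis by (simp add: blk_def vec_eq_iff)
qed


end


definition bil :: "real^'n^'n \<Rightarrow> 'n set \<Rightarrow> real^'n \<Rightarrow> real^'n \<Rightarrow> real" where
  "bil B S u v = (\<Sum>a\<in>S. \<Sum>b\<in>S. B $ a $ b * u $ a * v $ b)"

lemma qform_bil: "qform B S t = bil B S t t"
  by (simp add: qform_def bil_def)

lemma bil_add_left: "bil B S (u + w) v = bil B S u v + bil B S w v"
  by (simp add: bil_def algebra_simps sum.distrib)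
lemma bil_add_right: "bil B S v (u + w) = bil B S v u + bil B S v w"
  by (simp add: bil_def algebra_simps sum.distrib)
lemma bil_diff_left: "bil B S (u - w) v = bil B S u v - bil B S w v"
  by (simp add: bil_def algebra_simps sum_subtractf)
lemma bil_diff_right: "bil B S v (u - w) = bil B S v u - bil B S v w"
  by (simp add: bil_def algebra_simps sum_subtractf)
lemma bil_scale_left: "bil B S (c *\<^sub>R u) v = c * bil B S u v"
  by (simp add: bil_def algebra_simps sum_distrib_left)
lemma bil_scale_right: "bil B S v (c *\<^sub>R u) = c * bil B S v u"
  by (simp add: bil_def algebra_simps sum_distrib_left)

lemma bil_sym:
  assumes "\<forall>a\<in>S. \<forall>b\<in>S. B $ a $ b = B $ b $ a"
  shows "bil B S u v = bil B S v u"
proof -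
  have "bil B S u v = (\<Sum>b\<in>S. \<Sum>a\<in>S. B $ a $ b * u $ a * v $ b)"
    unfolding bil_def by (rule sum.swap)
  also have "\<dots> = bil B S v u" unfolding bil_def
    by (intro sum.cong refl) (use assms in \<open>simp add: mult_ac\<close>)
  finally show ?thesis .
qed

lemma blk_idem_in: "j \<in> S \<Longrightarrow> blk S t $ j = t $ j"
  by (simp add: blk_def)

lemma qform_blk: "qform B S (blk S t) = qform B S t"
  unfolding qform_def by (intro sum.cong refl) (simp add: blk_def)

lemma bil_blk: "bil B S (blk S u) (blk S v) = bil B S u v"
  unfolding bil_def by (intro sum.cong refl) (simp add: blk_def)

lemma qform_nonneg:
  assumes "pos_def_on S B" shows "qform B S t \<ge> 0"
proof -
  have "blk S t \<in> blockspace S" by (simp add: blk_def blockspace_def)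
  then have "qform B S (blk S t) \<ge> 0"
    using assms unfolding pos_def_on_def
    by (cases "blk S t = 0") (auto simp: qform_def intro: less_imp_le)
  then show ?thesis by (simp add: qform_blk)
qed

lemma bnorm_sq: assumes "pos_def_on S B" shows "(bnorm B S t)^2 = qform B S t"
  using qform_nonneg[OF assms, of t] by (simp add: bnorm_def)

lemma bnorm_nonneg: "pos_def_on S B \<Longrightarrow> bnorm B S t \<ge> 0"
  by (simp add: bnorm_def qform_nonneg)

lemma qform_scale: "qform B S (c *\<^sub>R t) = c^2 * qform B S t"
  by (simp add: qform_bil bil_scale_left bil_scale_right power2_eq_square)

lemma bnorm_scale: "c \<ge> 0 \<Longrightarrow> bnorm B S (c *\<^sub>R t) = c * bnorm B S t"
  by (simp add: bnorm_def qform_scale real_sqrt_mult)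

lemma qform_convex:
  assumes "\<forall>a\<in>S. \<forall>b\<in>S. B $ a $ b = B $ b $ a"
  shows "qform B S (\<alpha> *\<^sub>R x + (1 - \<alpha>) *\<^sub>R y) =
      \<alpha> * qform B S x + (1 - \<alpha>) * qform B S y - \<alpha> * (1 - \<alpha>) * qform B S (x - y)"
  using bil_sym[OF assms, of x y]
  by (simp add: qform_bil bil_add_left bil_add_right bil_scale_left bil_scale_right
      bil_diff_left bil_diff_right algebra_simps power2_eq_square)

lemma cauchy_schwarz_bil:
  assumes sym: "\<forall>a\<in>S. \<forall>b\<in>S. B $ a $ b = B $ b $ a"
    and psd: "\<And>x. bil B S x x \<ge> 0"
  shows "(bil B S u v)^2 \<le> bil B S u u * bil B S v v"
proof -
  define A where "A = bil B S u u"
  define C where "C = bil B S v v"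
  define D where "D = bil B S u v"
  have key: "A - 2 * l * D + l^2 * C \<ge> 0" for l
  proof -
    have "bil B S (u - l *\<^sub>R v) (u - l *\<^sub>R v) = A - 2 * l * D + l^2 * C"
      using bil_sym[OF sym, of u v]
      by (simp add: A_def C_def D_def bil_diff_left bil_diff_right bil_scale_left
          bil_scale_right algebra_simps power2_eq_square)
    then show ?thesis using psd by metis
  qed
  have C0: "C \<ge> 0" using psd by (simp add: C_def)
  show ?thesis
  proof (cases "C = 0")
    case True
    have "D = 0"
    proof (rule ccontr)
      assume "D \<noteq> 0"
      have "A - 2 * ((A + 1) / (2 * D)) * D + ((A + 1) / (2 * D))^2 * C \<ge> 0" by (rule key)
      then show False using True \<open>D \<noteq> 0\<close> by (simp add: field_simps)
    qed
    then show ?thesis using True by (simp add: A_def C_def D_def)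
  next
    case False
    then have Cp: "C > 0" using C0 by simp
    have "A - 2 * (D / C) * D + (D / C)^2 * C \<ge> 0" by (rule key)
    then have "A - D^2 / C \<ge> 0" using Cp by (simp add: field_simps power2_eq_square)
    then have "D^2 \<le> A * C" using Cp by (simp add: field_simps)
    then show ?thesis by (simp add: A_def C_def D_def)
  qed
qed

lemma bil_psd: "pos_def_on S B \<Longrightarrow> bil B S x x \<ge> 0"
  using qform_nonneg by (simp add: qform_bil)

lemma bil_le_sqrt:
  assumes "pos_def_on S B"
  shows "bil B S u v \<le> sqrt (qform B S u) * sqrt (qform B S v)"
proof -
  have sym: "\<forall>a\<in>S. \<forall>b\<in>S. B $ a $ b = B $ b $ a" using assms by (simp add: pos_def_on_def)
  have "(bil B S u v)^2 \<le> qform B S u * qform B S v"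
    using cauchy_schwarz_bil[OF sym bil_psd[OF assms]] by (simp add: qform_bil)
  then have "sqrt ((bil B S u v)^2) \<le> sqrt (qform B S u * qform B S v)"
    by (rule real_sqrt_le_mono)
  then have "\<bar>bil B S u v\<bar> \<le> sqrt (qform B S u) * sqrt (qform B S v)"
    by (simp add: real_sqrt_mult)
  then show ?thesis by linarith
qed

lemma dual_ineq:
  assumes pd: "pos_def_on S B" and inv: "inverse_on S B Bi" and t: "t \<in> blockspace S"
  shows "g \<bullet> t \<le> sqrt (qform Bi S g) * sqrt (qform B S t)"
proof -
  define u where "u = (\<chi> b. if b \<in> S then (\<Sum>c\<in>S. Bi $ b $ c * g $ c) else 0)"
  have sym: "\<forall>a\<in>S. \<forall>b\<in>S. B $ a $ b = B $ b $ a" using pd by (simp add: pos_def_on_def)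
  have Bu: "(\<Sum>b\<in>S. B $ a $ b * u $ b) = g $ a" if a: "a \<in> S" for a
  proof -
    have "(\<Sum>b\<in>S. B $ a $ b * u $ b) = (\<Sum>b\<in>S. \<Sum>c\<in>S. B $ a $ b * Bi $ b $ c * g $ c)"
      by (simp add: u_def sum_distrib_left mult_ac)
    also have "\<dots> = (\<Sum>c\<in>S. \<Sum>b\<in>S. B $ a $ b * Bi $ b $ c * g $ c)" by (rule sum.swap)
    also have "\<dots> = (\<Sum>c\<in>S. (\<Sum>b\<in>S. B $ a $ b * Bi $ b $ c) * g $ c)"
      by (simp add: sum_distrib_right)
    also have "\<dots> = (\<Sum>c\<in>S. (if a = c then g $ c else 0))"
      using inv a unfolding inverse_on_def by (intro sum.cong refl) simp
    also have "\<dots> = g $ a" using a by simp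
    finally show ?thesis .
  qed
  have gt: "g \<bullet> t = bil B S t u"
  proof -
    have "g \<bullet> t = (\<Sum>a\<in>UNIV. g $ a * t $ a)" by (simp add: inner_vec_def)
    also have "\<dots> = (\<Sum>a\<in>S. g $ a * t $ a)"
      using t by (intro sum.mono_neutral_right) (auto simp: blockspace_def)
    also have "\<dots> = (\<Sum>a\<in>S. (\<Sum>b\<in>S. B $ a $ b * u $ b) * t $ a)"
      by (intro sum.cong refl) (simp add: Bu)
    also have "\<dots> = bil B S t u" unfolding bil_def
      by (simp add: sum_distrib_right sum_distrib_left mult_ac)
    finally show ?thesis .
  qed
  have qu: "qform B S u = qform Bi S g"
  proof -
    have "qform B S u = (\<Sum>a\<in>S. u $ a * (\<Sum>b\<in>S. B $ a $ b * u $ b))"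
      unfolding qform_def by (simp add: sum_distrib_left mult_ac)
    also have "\<dots> = (\<Sum>a\<in>S. u $ a * g $ a)" by (intro sum.cong refl) (simp add: Bu)
    also have "\<dots> = qform Bi S g" unfolding qform_def u_def
      by (simp add: sum_distrib_right sum_distrib_left mult_ac)
    finally show ?thesis .
  qed
  show ?thesis using bil_le_sqrt[OF pd, of t u] gt qu by (simp add: mult.commute)
qed



context ucdc begin

lemma Bpd_i: "i < n \<Longrightarrow> pos_def_on (S i) (B i)" using Bpd by simp
lemma Binv_i: "i < n \<Longrightarrow> inverse_on (S i) (B i) (Binv i)" using Binv by simp
lemma L_pos: "i < n \<Longrightarrow> L i > 0" using Lpos by simp

lemma f_line_deriv:
  "((\<lambda>s. f (x + s *\<^sub>R t)) has_real_derivative (gf (x + s *\<^sub>R t) \<bullet> t)) (at s)"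
proof -
  have d: "((\<lambda>s. x + s *\<^sub>R t) has_derivative (\<lambda>d. d *\<^sub>R t)) (at s)"
    by (auto intro!: derivative_eq_intros)
  have "((\<lambda>s. f (x + s *\<^sub>R t)) has_derivative (\<lambda>d. gf (x + s *\<^sub>R t) \<bullet> (d *\<^sub>R t))) (at s)"
    using has_derivative_compose[OF d] fgrad by blast
  then show ?thesis
    by (rule has_derivative_imp_has_field_derivative) (simp add: mult.commute)
qed

lemma descent:
  assumes i: "i < n" and t: "t \<in> blockspace (S i)"
  shows "f (x + t) \<le> f x + gf x \<bullet> t + L i / 2 * qform (B i) (S i) t"
proof -
  define q where "q = qform (B i) (S i) t"
  define h where "h s = f (x + s *\<^sub>R t) - f x - s * (gf x \<bullet> t) - L i / 2 * s^2 * q" for s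
  have hd: "(h has_real_derivative (gf (x + s *\<^sub>R t) \<bullet> t - gf x \<bullet> t - L i * s * q)) (at s)" for s
    unfolding h_def
    by (auto intro!: derivative_eq_intros f_line_deriv simp: power2_eq_square algebra_simps)
  have pd: "pos_def_on (S i) (B i)" using Bpd_i[OF i] .
  have le: "gf (x + s *\<^sub>R t) \<bullet> t - gf x \<bullet> t - L i * s * q \<le> 0" if s: "0 \<le> s" for s
  proof -
    define g where "g = blk (S i) (gf (x + s *\<^sub>R t)) - blk (S i) (gf x)"
    have st: "s *\<^sub>R t \<in> blockspace (S i)" using t by (simp add: blockspace_scale)
    have "gf (x + s *\<^sub>R t) \<bullet> t - gf x \<bullet> t = g \<bullet> t"
      using t by (simp add: g_def inner_diff_left inner_blk_left)
    also have "\<dots> \<le> sqrt (qform (Binv i) (S i) g) * sqrt q"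
      unfolding q_def by (rule dual_ineq[OF pd Binv_i[OF i] t])
    also have "\<dots> \<le> (L i * bnorm (B i) (S i) (s *\<^sub>R t)) * sqrt q"
      using fLip i st qform_nonneg[OF pd, of t] unfolding g_def q_def by (intro mult_right_mono) auto
    also have "\<dots> = L i * s * q"
    proof -
      have q0: "q \<ge> 0" using qform_nonneg[OF pd, of t] by (simp add: q_def)
      have "bnorm (B i) (S i) (s *\<^sub>R t) * sqrt q = s * (sqrt q * sqrt q)"
        using bnorm_scale[OF s, of "B i" "S i" t] by (simp add: q_def bnorm_def)
      also have "\<dots> = s * q" using q0 by simp
      finally show ?thesis by simp
    qed
    finally show ?thesis by simp
  qed
  have "h 1 \<le> h 0"
    by (rule DERIV_nonpos_imp_nonincreasing[of 0 1]) (use hd le in fastforce)+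
  then show ?thesis by (simp add: h_def q_def)
qed

lemma f_tangent: "f y \<ge> f x + gf x \<bullet> (y - x)"
proof -
  define \<phi> where "\<phi> s = f (x + s *\<^sub>R (y - x))" for s
  have cv: "convex_on UNIV \<phi>"
  proof (rule convex_onI)
    fix u a b :: real assume u: "0 < u" "u < 1"
    have "\<phi> ((1 - u) *\<^sub>R a + u *\<^sub>R b) = f ((1 - u) *\<^sub>R (x + a *\<^sub>R (y - x)) + u *\<^sub>R (x + b *\<^sub>R (y - x)))"
      by (simp add: \<phi>_def algebra_simps)
    also have "\<dots> \<le> (1 - u) * \<phi> a + u * \<phi> b"
      unfolding \<phi>_def using u by (intro convex_onD[OF fconv]) auto
    finally show "\<phi> ((1 - u) *\<^sub>R a + u *\<^sub>R b) \<le> (1 - u) * \<phi> a + u * \<phi> b" .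
  qed simp
  have "\<phi> 1 - \<phi> 0 \<ge> (gf x \<bullet> (y - x)) * (1 - 0)"
    using f_line_deriv[of x "y - x" 0]
    by (intro convex_on_imp_above_tangent[OF cv]) (auto simp: \<phi>_def[abs_def])
  then show ?thesis by (simp add: \<phi>_def)
qed

end


lemma affine_minorant:
  fixes V :: "('a::euclidean_space) set" and \<psi> :: "'a \<Rightarrow> ereal"
  assumes s0: "s0 \<in> V" "\<psi> s0 = ereal v0"
    and cvx: "convex {(t, z::real). t \<in> V \<and> \<psi> t \<le> ereal z}"
    and cl: "closed {(t, z::real). t \<in> V \<and> \<psi> t \<le> ereal z}"
    and ninf: "\<forall>s\<in>V. \<psi> s \<noteq> -\<infinity>"
  shows "\<exists>w1 w2 \<beta>. w2 > 0 \<and> (\<forall>s\<in>V. \<psi> s \<ge> ereal ((\<beta> - w1 \<bullet> s) / w2))"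
proof -
  define E where "E = {(t, z::real). t \<in> V \<and> \<psi> t \<le> ereal z}"
  have "(s0, v0 - 1) \<notin> E" using s0 by (auto simp: E_def)
  then obtain w \<beta> where w: "inner w (s0, v0 - 1) < \<beta>" "\<forall>x\<in>E. inner w x > \<beta>"
    using separating_hyperplane_closed_point[of E "(s0, v0 - 1)"] cvx cl unfolding E_def by blast
  obtain w1 w2 where ww: "w = (w1, w2)" by (cases w)
  have "(s0, v0) \<in> E" using s0 by (auto simp: E_def)
  then have a: "w1 \<bullet> s0 + w2 * v0 > \<beta>" using w ww by auto
  have b: "w1 \<bullet> s0 + w2 * (v0 - 1) < \<beta>" using w ww by auto
  have w2: "w2 > 0" using a b by (simp add: algebra_simps)
  have "\<psi> s \<ge> ereal ((\<beta> - w1 \<bullet> s) / w2)" if s: "s \<in> V" for s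
  proof (cases "\<psi> s")
    case (real z)
    then have "(s, z) \<in> E" using s by (auto simp: E_def)
    then have "w1 \<bullet> s + w2 * z > \<beta>" using w ww by auto
    then have "(\<beta> - w1 \<bullet> s) / w2 < z" using w2 by (simp add: field_simps)
    then show ?thesis using real by simp
  qed (use ninf s in simp_all)
  then show ?thesis using w2 by blast
qed

lemma min_exists:
  fixes V :: "('a::euclidean_space) set" and \<psi> :: "'a \<Rightarrow> ereal" and h :: "'a \<Rightarrow> real"
  assumes Vc: "closed V"
    and Vadd: "\<And>a b. a \<in> V \<Longrightarrow> b \<in> V \<Longrightarrow> a + b \<in> V"
    and Vdiff: "\<And>a b. a \<in> V \<Longrightarrow> b \<in> V \<Longrightarrow> a - b \<in> V"
    and y: "y \<in> V"
    and fin: "\<exists>s0\<in>V. \<psi> s0 \<noteq> \<infinity>" and ninf: "\<forall>s\<in>V. \<psi> s \<noteq> -\<infinity>"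
    and cvx: "convex {(t, z::real). t \<in> V \<and> \<psi> t \<le> ereal z}"
    and cl: "closed {(t, z::real). t \<in> V \<and> \<psi> t \<le> ereal z}"
    and hc: "continuous_on UNIV h"
    and a: "a > 0" and coer: "\<And>t. t \<in> V \<Longrightarrow> h t \<ge> a * (norm t)^2 - b * norm t"
  shows "\<exists>t\<in>V. \<forall>s\<in>V. ereal (h t) + \<psi> (y + t) \<le> ereal (h s) + \<psi> (y + s)"
proof -
  obtain s0 where s0V: "s0 \<in> V" and s0f: "\<psi> s0 \<noteq> \<infinity>" using fin by blast
  obtain v0 where v0: "\<psi> s0 = ereal v0" using s0f ninf s0V by (cases "\<psi> s0") auto
  obtain w1 w2 \<beta> where w2: "w2 > 0" and minor: "\<And>s. s \<in> V \<Longrightarrow> \<psi> s \<ge> ereal ((\<beta> - w1 \<bullet> s) / w2)"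
    using affine_minorant[OF s0V v0 cvx cl ninf] by blast
  define K0 where "K0 = (\<beta> - w1 \<bullet> y) / w2"
  define K1 where "K1 = norm w1 / w2"
  define BB where "BB = \<bar>b\<bar> + K1"
  have K1: "K1 \<ge> 0" using w2 by (simp add: K1_def)
  define obj where "obj t = ereal (h t) + \<psi> (y + t)" for t
  define g where "g r = a * r^2 - BB * r + K0" for r
  have lowb: "obj t \<ge> ereal (g (norm t))" if t: "t \<in> V" for t
  proof -
    have yt: "y + t \<in> V" using Vadd[OF y t] .
    have "(\<beta> - w1 \<bullet> (y + t)) / w2 = K0 - (w1 \<bullet> t) / w2"
      using w2 by (simp add: K0_def inner_add_right field_simps)
    also have "\<dots> \<ge> K0 - K1 * norm t"
    proof -
      have "w1 \<bullet> t \<le> norm w1 * norm t" by (rule norm_cauchy_schwarz)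
      then have "(w1 \<bullet> t) / w2 \<le> norm w1 * norm t / w2" using w2 by (simp add: divide_right_mono)
      then show ?thesis by (simp add: K1_def)
    qed
    finally have p1: "\<psi> (y + t) \<ge> ereal (K0 - K1 * norm t)"
      using minor[OF yt] by (meson ereal_less_eq(3) order_trans)
    have "h t + (K0 - K1 * norm t) \<ge> g (norm t)"
    proof -
      have "b * norm t \<le> \<bar>b\<bar> * norm t" by (simp add: mult_right_mono)
      then show ?thesis using coer[OF t] by (simp add: g_def BB_def algebra_simps)
    qed
    then have "ereal (g (norm t)) \<le> ereal (h t) + ereal (K0 - K1 * norm t)" by simp
    also have "\<dots> \<le> obj t" unfolding obj_def using p1 by (rule add_left_mono)
    finally show ?thesis .
  qed
  define t0 where "t0 = s0 - y"
  have t0V: "t0 \<in> V" using Vdiff[OF s0V y] by (simp add: t0_def)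
  define c where "c = h t0 + v0"
  have objt0: "obj t0 = ereal c" by (simp add: obj_def t0_def v0 c_def)
  define R where "R = (BB + \<bar>K0\<bar> + \<bar>c\<bar> + 1) / a + 1"
  have BB0: "BB \<ge> 0" using K1 by (simp add: BB_def)
  have R1: "R \<ge> 1" using a BB0 by (simp add: R_def)
  have big: "g r > c" if r: "r > R" for r
  proof -
    have r1: "r \<ge> 1" using r R1 by simp
    have "a * r \<ge> a * ((BB + \<bar>K0\<bar> + \<bar>c\<bar> + 1) / a)"
      using r a unfolding R_def by (intro mult_left_mono) auto
    then have ar: "a * r - BB \<ge> \<bar>K0\<bar> + \<bar>c\<bar> + 1" using a by simp
    have "r * (a * r - BB) \<ge> 1 * (\<bar>K0\<bar> + \<bar>c\<bar> + 1)"
      using ar r1 by (intro mult_mono) auto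
    then show ?thesis by (simp add: g_def power2_eq_square algebra_simps)
  qed
  define lo where "lo = K0 - BB * R"
  have small: "g r \<ge> lo" if "0 \<le> r" "r \<le> R" for r
  proof -
    have "BB * r \<le> BB * R" using that BB0 by (simp add: mult_left_mono)
    moreover have "a * r^2 \<ge> 0" using a by simp
    ultimately show ?thesis by (simp add: g_def lo_def)
  qed
  define E where "E = {(t, z::real). t \<in> V \<and> \<psi> t \<le> ereal z}"
  define G where "G p = (y + fst p, snd p - h (fst p))" for p :: "'a \<times> real"
  define E' where "E' = G -` E \<inter> (cball 0 R \<times> {lo..c})"
  have E'_iff: "p \<in> E' \<longleftrightarrow> fst p \<in> V \<and> norm (fst p) \<le> R \<and> lo \<le> snd p \<and> snd p \<le> c
       \<and> \<psi> (y + fst p) \<le> ereal (snd p - h (fst p))" for p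
  proof -
    have "y + fst p \<in> V \<longleftrightarrow> fst p \<in> V"
      using Vadd[OF y] Vdiff[of "y + fst p" y] y by fastforce
    then show ?thesis by (cases p) (auto simp: E'_def G_def E_def)
  qed
  have Gc: "continuous_on UNIV G" unfolding G_def
    by (intro continuous_intros continuous_on_compose2[OF hc]) auto
  have cE': "compact E'" unfolding E'_def
    by (intro closed_Int_compact closed_vimage Gc compact_Times compact_cball compact_Icc)
       (use cl in \<open>simp add: E_def\<close>)
  have t0R: "norm t0 \<le> R"
  proof (rule ccontr)
    assume "\<not> norm t0 \<le> R"
    then have "g (norm t0) > c" by (intro big) simp
    then show False using lowb[OF t0V] objt0 by simp
  qed
  have "(t0, c) \<in> E'"
  proof -
    have "ereal lo \<le> ereal (g (norm t0))" using small[OF _ t0R] by simp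
    then have "lo \<le> c" using lowb[OF t0V] objt0 by (metis ereal_less_eq(3) order_trans)
    moreover have "\<psi> (y + t0) \<le> ereal (c - h t0)" by (simp add: t0_def v0 c_def)
    ultimately show ?thesis using t0V t0R by (simp add: E'_iff)
  qed
  then have ne: "E' \<noteq> {}" by blast
  obtain p where pE: "p \<in> E'" and pmin: "\<And>q. q \<in> E' \<Longrightarrow> snd p \<le> snd q"
    using continuous_attains_inf[OF cE' ne continuous_on_snd[OF continuous_on_id]] by blast
  obtain ts zs where p: "p = (ts, zs)" by (cases p)
  have tsV: "ts \<in> V" and zc: "zs \<le> c" and pz: "\<psi> (y + ts) \<le> ereal (zs - h ts)"
    using pE by (auto simp: E'_iff p)
  have objts: "obj ts \<le> ereal zs"
  proof -
    have "obj ts \<le> ereal (h ts) + ereal (zs - h ts)" unfolding obj_def using pz by (rule add_left_mono)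
    then show ?thesis by simp
  qed
  have "obj ts \<le> obj s" if sV: "s \<in> V" for s
  proof (cases "obj s < ereal c")
    case False
    then show ?thesis using objts zc by (meson ereal_less_eq(3) not_le order_trans)
  next
    case True
    have "\<psi> (y + s) \<noteq> \<infinity>" using True by (auto simp: obj_def)
    moreover have "\<psi> (y + s) \<noteq> -\<infinity>" using ninf Vadd[OF y sV] by blast
    ultimately obtain v where v: "\<psi> (y + s) = ereal v" by (cases "\<psi> (y + s)") auto
    define z where "z = h s + v"
    have objs: "obj s = ereal z" by (simp add: obj_def v z_def)
    have sR: "norm s \<le> R"
    proof (rule ccontr)
      assume "\<not> norm s \<le> R"
      then have "g (norm s) > c" by (intro big) simp
      then show False using lowb[OF sV] True by (simp add: objs)
    qed
    have "ereal lo \<le> ereal (g (norm s))" using small[OF _ sR] by simp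
    then have "lo \<le> z" using lowb[OF sV] objs by (metis ereal_less_eq(3) order_trans)
    moreover have "z \<le> c" using True objs by simp
    moreover have "\<psi> (y + s) \<le> ereal (z - h s)" by (simp add: v z_def)
    ultimately have "(s, z) \<in> E'" using sV sR by (simp add: E'_iff)
    then have "zs \<le> z" using pmin[of "(s, z)"] by (simp add: p)
    then show ?thesis using objts objs by (metis ereal_less_eq(3) order_trans)
  qed
  then show ?thesis using tsV unfolding obj_def by blast
qed



lemma ereal_shuffle: "ereal a + (P + ereal c) = ereal (a + c) + P"
  by (cases P) auto

lemma qform_cont: "continuous_on UNIV (\<lambda>t. qform B S t)"
  unfolding qform_def by (intro continuous_intros)

lemma qform_coercive:
  assumes pd: "pos_def_on S B"
  shows "\<exists>lam>0. \<forall>t\<in>blockspace S. qform B S t \<ge> lam * (norm t)^2"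
proof -
  define K where "K = blockspace S \<inter> sphere 0 1"
  have cK: "compact K" unfolding K_def
    by (intro closed_Int_compact compact_sphere) (simp add: closed_blockspace_gen)
  show ?thesis
  proof (cases "K = {}")
    case True
    have "t = 0" if t: "t \<in> blockspace S" for t
    proof (rule ccontr)
      assume "t \<noteq> 0"
      then have "(1 / norm t) *\<^sub>R t \<in> K" using t
        by (auto simp: K_def blockspace_def)
      then show False using True by blast
    qed
    have "\<forall>t\<in>blockspace S. qform B S t \<ge> 1 * (norm t)^2"
    proof
      fix t assume "t \<in> blockspace S"
      then have "t = 0" by (rule \<open>\<And>t. t \<in> blockspace S \<Longrightarrow> t = 0\<close>)
      then show "qform B S t \<ge> 1 * (norm t)^2" by (simp add: qform_def)
    qed
    then show ?thesis by (intro exI[of _ 1]) simp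
  next
    case False
    obtain k where kK: "k \<in> K" and kmin: "\<And>t. t \<in> K \<Longrightarrow> qform B S k \<le> qform B S t"
      using continuous_attains_inf[OF cK False continuous_on_subset[OF qform_cont]] by blast
    have k0: "k \<noteq> 0" "k \<in> blockspace S" using kK by (auto simp: K_def)
    have lpos: "qform B S k > 0" using pd k0 unfolding pos_def_on_def by blast
    have "qform B S t \<ge> qform B S k * (norm t)^2" if t: "t \<in> blockspace S" for t
    proof (cases "t = 0")
      case True then show ?thesis by (simp add: qform_def)
    next
      case False
      have "(1 / norm t) *\<^sub>R t \<in> K" using t False by (auto simp: K_def blockspace_def)
      then have "qform B S k \<le> qform B S ((1 / norm t) *\<^sub>R t)" by (rule kmin)
      also have "\<dots> = qform B S t / (norm t)^2" by (simp add: qform_scale power_divide)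
      finally show ?thesis using False by (simp add: field_simps)
    qed
    then show ?thesis using lpos by blast
  qed
qed

locale ucdc2 = ucdc +
  fixes x0 :: "real^'a" and \<mu> :: real and \<Phi> :: "nat \<Rightarrow> real^'a \<Rightarrow> ereal"
  assumes mu: "\<mu> > 0"
    and Phi_def: "\<Phi> = (\<lambda>i t. \<Psi> i t + ereal (\<mu> / 2 * L i * (bnorm (B i) (S i) (t - blk (S i) x0))^2))"
begin

definition objf :: "nat \<Rightarrow> real^'a \<Rightarrow> real^'a \<Rightarrow> ereal" where
  "objf i x t = ereal (blk (S i) (gf x) \<bullet> t + L i / 2 * (bnorm (B i) (S i) t)^2) + \<Phi> i (blk (S i) x + t)"

abbreviation T where "T i x \<equiv> ucdc_T gf L B S \<Phi> i x"

lemma T_some: "T i x = (SOME t. t \<in> blockspace (S i) \<and> (\<forall>s\<in>blockspace (S i). objf i x t \<le> objf i x s))"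
  by (simp add: ucdc_T_def objf_def Let_def)

lemma T_ex:
  assumes i: "i < n"
  shows "\<exists>t. t \<in> blockspace (S i) \<and> (\<forall>s\<in>blockspace (S i). objf i x t \<le> objf i x s)"
proof -
  have pd: "pos_def_on (S i) (B i)" using Bpd i by simp
  have pcc: "proper_closed_convex_on (S i) (\<Psi> i)" using \<Psi>pcc i by simp
  define y where "y = blk (S i) x"
  define g where "g = blk (S i) (gf x)"
  define h where "h t = g \<bullet> t + L i / 2 * qform (B i) (S i) t
      + \<mu> / 2 * L i * qform (B i) (S i) (y + t - blk (S i) x0)" for t
  have objeq: "objf i x t = ereal (h t) + \<Psi> i (y + t)" for t
    unfolding objf_def unfolding Phi_def ereal_shuffle
    by (simp add: h_def bnorm_sq[OF pd] y_def g_def algebra_simps)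
  have hc: "continuous_on UNIV h" unfolding h_def
    by (intro continuous_intros continuous_on_compose2[OF qform_cont]) auto
  obtain lam where lam: "lam > 0" "\<And>t. t \<in> blockspace (S i) \<Longrightarrow> qform (B i) (S i) t \<ge> lam * (norm t)^2"
    using qform_coercive[OF pd] by blast
  have Lp: "L i > 0" using Lpos i by simp
  have coer: "h t \<ge> (L i / 2 * lam) * (norm t)^2 - norm g * norm t" if t: "t \<in> blockspace (S i)" for t
  proof -
    have "g \<bullet> t \<ge> - (norm g * norm t)"
      using norm_cauchy_schwarz[of "-g" t] by simp
    moreover have "L i / 2 * qform (B i) (S i) t \<ge> L i / 2 * (lam * (norm t)^2)"
      using lam(2)[OF t] Lp by (intro mult_left_mono) auto
    moreover have "\<mu> / 2 * L i * qform (B i) (S i) (y + t - blk (S i) x0) \<ge> 0"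
      using mu Lp qform_nonneg[OF pd] by simp
    ultimately show ?thesis by (simp add: h_def algebra_simps)
  qed
  have "\<exists>t\<in>blockspace (S i). \<forall>s\<in>blockspace (S i). ereal (h t) + \<Psi> i (y + t) \<le> ereal (h s) + \<Psi> i (y + s)"
    apply (rule min_exists[where b = "norm g" and a = "L i / 2 * lam"])
    using pcc closed_blockspace_gen lam Lp coer hc
    by (auto simp: proper_closed_convex_on_def y_def blk_in blockspace_add blockspace_diff)
  then show ?thesis by (auto simp: objeq)
qed

lemma T_prop:
  assumes "i < n"
  shows "T i x \<in> blockspace (S i)" "\<And>s. s \<in> blockspace (S i) \<Longrightarrow> objf i x (T i x) \<le> objf i x s"
  using someI_ex[OF T_ex[OF assms, of x]] unfolding T_some by blast+

end


context ucdc2 begin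

abbreviation qq where "qq i v \<equiv> qform (B i) (S i) v"

definition psr where "psr i x = real_of_ereal (\<Psi> i (blk (S i) x))"
definition phr where "phr i x = psr i x + \<mu> / 2 * L i * qq i (blk (S i) x - blk (S i) x0)"
definition good where "good x \<longleftrightarrow> (\<forall>i<n. \<Psi> i (blk (S i) x) \<noteq> \<infinity>)"
definition Fmr where "Fmr x = f x + (\<Sum>i<n. phr i x)"

lemma pd_i: "i < n \<Longrightarrow> pos_def_on (S i) (B i)" using Bpd by simp
lemma pcc_i: "i < n \<Longrightarrow> proper_closed_convex_on (S i) (\<Psi> i)" using \<Psi>pcc by simp

lemma Psi_ninf: "i < n \<Longrightarrow> s \<in> blockspace (S i) \<Longrightarrow> \<Psi> i s \<noteq> -\<infinity>"
  using pcc_i unfolding proper_closed_convex_on_def by blast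

lemma Psi_real: "i < n \<Longrightarrow> s \<in> blockspace (S i) \<Longrightarrow> \<Psi> i s \<noteq> \<infinity> \<Longrightarrow> \<Psi> i s = ereal (real_of_ereal (\<Psi> i s))"
  using Psi_ninf by (cases "\<Psi> i s") auto

lemma good_Psi: "good x \<Longrightarrow> i < n \<Longrightarrow> \<Psi> i (blk (S i) x) = ereal (psr i x)"
  unfolding psr_def good_def using Psi_real blk_in by blast

lemma Phi_eq: "i < n \<Longrightarrow> \<Phi> i s = \<Psi> i s + ereal (\<mu> / 2 * L i * qq i (s - blk (S i) x0))"
  by (simp add: Phi_def bnorm_sq[OF pd_i])

lemma good_Phi: "good x \<Longrightarrow> i < n \<Longrightarrow> \<Phi> i (blk (S i) x) = ereal (phr i x)"
  by (simp add: Phi_eq good_Psi phr_def)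

lemma Psi_cvx:
  assumes i: "i < n" and ab: "a \<in> blockspace (S i)" "b \<in> blockspace (S i)"
    and va: "\<Psi> i a = ereal va" and vb: "\<Psi> i b = ereal vb" and al: "0 \<le> \<alpha>" "\<alpha> \<le> 1"
  shows "\<Psi> i (\<alpha> *\<^sub>R a + (1 - \<alpha>) *\<^sub>R b) \<le> ereal (\<alpha> * va + (1 - \<alpha>) * vb)"
proof -
  define E where "E = {(t, z::real). t \<in> blockspace (S i) \<and> \<Psi> i t \<le> ereal z}"
  have cE: "convex E" using pcc_i[OF i] unfolding proper_closed_convex_on_def E_def by blast
  have "(a, va) \<in> E" "(b, vb) \<in> E" using ab va vb by (auto simp: E_def)
  then have "\<alpha> *\<^sub>R (a, va) + (1 - \<alpha>) *\<^sub>R (b, vb) \<in> E"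
    using al by (intro convexD[OF cE]) auto
  then show ?thesis by (simp add: E_def)
qed

lemma blk_step: "i < n \<Longrightarrow> j < n \<Longrightarrow> t \<in> blockspace (S i) \<Longrightarrow>
    blk (S j) (x + t) = (if j = i then blk (S i) x + t else blk (S j) x)"
  by (auto simp: blk_add blk_id blk_other)

lemma sum_minus_i: "i < n \<Longrightarrow> (\<Sum>j<n. (a j :: 'b::ab_group_add)) = a i + (\<Sum>j\<in>{..<n}-{i}. a j)"
  by (simp add: sum.remove)

lemma objf_real:
  assumes i: "i < n" and d: "d \<in> blockspace (S i)" and fin: "\<Psi> i (blk (S i) x + d) = ereal v"
  shows "objf i x d = ereal (blk (S i) (gf x) \<bullet> d + L i / 2 * qq i d
      + (v + \<mu> / 2 * L i * qq i (blk (S i) x + d - blk (S i) x0)))"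
  unfolding objf_def using i fin by (simp add: Phi_eq bnorm_sq[OF pd_i[OF i]])

lemma step_good:
  assumes g: "good x" and i: "i < n"
  shows "good (x + T i x)"
proof -
  have Tb: "T i x \<in> blockspace (S i)" using T_prop[OF i] by blast
  have "objf i x (T i x) \<le> objf i x 0" using T_prop(2)[OF i blockspace_zero] .
  also have "objf i x 0 = ereal (phr i x)" using good_Phi[OF g i] by (simp add: objf_def bnorm_def qform_def)
  finally have lt: "objf i x (T i x) < \<infinity>" by (rule le_less_trans) simp
  have "\<Psi> i (blk (S i) x + T i x) \<noteq> \<infinity>"
  proof
    assume inf: "\<Psi> i (blk (S i) x + T i x) = \<infinity>"
    then have "\<Phi> i (blk (S i) x + T i x) = \<infinity>" by (simp add: Phi_eq[OF i])
    then have "objf i x (T i x) = \<infinity>" by (simp add: objf_def)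
    then show False using lt by simp
  qed
  then show ?thesis using g Tb i unfolding good_def by (auto simp: blk_step)
qed

lemma step_le:
  assumes g: "good x" and gz: "good z" and i: "i < n"
  shows "Fmr (x + T i x) \<le> f x + blk (S i) (gf x) \<bullet> (blk (S i) z - blk (S i) x)
      + L i / 2 * qq i (blk (S i) z - blk (S i) x) + phr i z + (\<Sum>j\<in>{..<n}-{i}. phr j x)"
proof -
  define t where "t = T i x"
  have tb: "t \<in> blockspace (S i)" using T_prop[OF i] by (simp add: t_def)
  define d where "d = blk (S i) z - blk (S i) x"
  have db: "d \<in> blockspace (S i)" by (simp add: d_def blk_in blockspace_diff)
  have g': "good (x + t)" using step_good[OF g i] by (simp add: t_def)
  have bxt: "blk (S i) (x + t) = blk (S i) x + t" using blk_step[OF i i tb] by simp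
  have vt: "\<Psi> i (blk (S i) x + t) = ereal (psr i (x + t))" using good_Psi[OF g' i] bxt by simp
  have vd: "\<Psi> i (blk (S i) x + d) = ereal (psr i z)" using good_Psi[OF gz i] by (simp add: d_def)
  have "objf i x t \<le> objf i x d" using T_prop(2)[OF i db] by (simp add: t_def)
  then have ob: "blk (S i) (gf x) \<bullet> t + L i / 2 * qq i t + phr i (x + t)
      \<le> blk (S i) (gf x) \<bullet> d + L i / 2 * qq i d + phr i z"
    using objf_real[OF i tb vt] objf_real[OF i db vd] bxt
    by (simp add: phr_def d_def)
  have desc: "f (x + t) \<le> f x + blk (S i) (gf x) \<bullet> t + L i / 2 * qq i t"
    using descent[OF i tb, of x] inner_blk_left[OF tb, of "gf x"] by simp
  have rest: "(\<Sum>j\<in>{..<n}-{i}. phr j (x + t)) = (\<Sum>j\<in>{..<n}-{i}. phr j x)"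
    using tb i by (intro sum.cong refl) (auto simp: phr_def psr_def blk_step)
  have "Fmr (x + t) = f (x + t) + phr i (x + t) + (\<Sum>j\<in>{..<n}-{i}. phr j x)"
    unfolding Fmr_def using sum_minus_i[OF i, of "\<lambda>j. phr j (x + t)"] rest by simp
  also have "\<dots> \<le> f x + blk (S i) (gf x) \<bullet> d + L i / 2 * qq i d + phr i z + (\<Sum>j\<in>{..<n}-{i}. phr j x)"
    using desc ob by simp
  finally show ?thesis by (simp add: t_def d_def)
qed

end


context ucdc2 begin

definition "alpha = \<mu> / (1 + \<mu>)"

lemma alpha: "0 \<le> alpha" "alpha \<le> 1" "alpha^2 = alpha * (1 - alpha) * \<mu>"
  using mu by (auto simp: alpha_def field_simps power2_eq_square)

lemma avg_step:
  assumes gx: "good x" and gy: "good y"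
  shows "(\<Sum>i<n. Fmr (x + T i x)) \<le> (real n - alpha) * Fmr x + alpha * Fmr y"
proof -
  define z where "z = alpha *\<^sub>R y + (1 - alpha) *\<^sub>R x"
  have bz: "blk (S i) z = alpha *\<^sub>R blk (S i) y + (1 - alpha) *\<^sub>R blk (S i) x" for i
    by (simp add: z_def blk_add blk_scale)
  have psz: "\<Psi> i (blk (S i) z) \<le> ereal (alpha * psr i y + (1 - alpha) * psr i x)" if i: "i < n" for i
    unfolding bz using Psi_cvx[OF i blk_in blk_in good_Psi[OF gy i] good_Psi[OF gx i] alpha(1,2)] .
  have gz: "good z" unfolding good_def
  proof (intro allI impI)
    fix i assume i: "i < n"
    show "\<Psi> i (blk (S i) z) \<noteq> \<infinity>" using psz[OF i] by auto
  qed
  have phz: "phr i z \<le> alpha * phr i y + (1 - alpha) * phr i x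
      - alpha * (1 - alpha) * \<mu> / 2 * L i * qq i (blk (S i) y - blk (S i) x)" if i: "i < n" for i
  proof -
    have p1: "psr i z \<le> alpha * psr i y + (1 - alpha) * psr i x"
      using psz[OF i] good_Psi[OF gz i] by simp
    have sym: "\<forall>a\<in>S i. \<forall>b\<in>S i. B i $ a $ b = B i $ b $ a" using pd_i[OF i] by (simp add: pos_def_on_def)
    have e: "blk (S i) z - blk (S i) x0 = alpha *\<^sub>R (blk (S i) y - blk (S i) x0)
        + (1 - alpha) *\<^sub>R (blk (S i) x - blk (S i) x0)"
      by (simp add: bz algebra_simps)
    have p2: "qq i (blk (S i) z - blk (S i) x0) = alpha * qq i (blk (S i) y - blk (S i) x0)
        + (1 - alpha) * qq i (blk (S i) x - blk (S i) x0) - alpha * (1 - alpha) * qq i (blk (S i) y - blk (S i) x)"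
      unfolding e qform_convex[OF sym] by simp
    have Lm: "\<mu> / 2 * L i \<ge> 0" using mu L_pos[OF i] by simp
    have eq: "alpha * phr i y + (1 - alpha) * phr i x
      - alpha * (1 - alpha) * \<mu> / 2 * L i * qq i (blk (S i) y - blk (S i) x) - phr i z
      = alpha * psr i y + (1 - alpha) * psr i x - psr i z"
      unfolding phr_def p2 by (simp add: field_simps)
    show ?thesis using p1 eq by linarith
  qed
  define Px where "Px = (\<Sum>i<n. phr i x)"
  define Py where "Py = (\<Sum>i<n. phr i y)"
  define Dq where "Dq = (\<Sum>i<n. L i * qq i (blk (S i) y - blk (S i) x))"
  have "(\<Sum>i<n. Fmr (x + T i x)) \<le> (\<Sum>i<n. f x + blk (S i) (gf x) \<bullet> (blk (S i) z - blk (S i) x)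
      + L i / 2 * qq i (blk (S i) z - blk (S i) x) + phr i z + (\<Sum>j\<in>{..<n}-{i}. phr j x))"
    by (intro sum_mono step_le[OF gx gz]) simp
  also have "\<dots> = real n * f x + (\<Sum>i<n. blk (S i) (gf x) \<bullet> blk (S i) (z - x))
      + (\<Sum>i<n. L i / 2 * qq i (blk (S i) z - blk (S i) x)) + (\<Sum>i<n. phr i z)
      + (\<Sum>i<n. \<Sum>j\<in>{..<n}-{i}. phr j x)"
    by (simp add: sum.distrib blk_diff)
  also have "(\<Sum>i<n. blk (S i) (gf x) \<bullet> blk (S i) (z - x)) = alpha * (gf x \<bullet> (y - x))"
    by (simp add: inner_blk_sum z_def algebra_simps inner_diff_right inner_add_right)
  also have "(\<Sum>i<n. L i / 2 * qq i (blk (S i) z - blk (S i) x)) = alpha^2 / 2 * Dq"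
  proof -
    have "blk (S i) z - blk (S i) x = alpha *\<^sub>R (blk (S i) y - blk (S i) x)" for i
      by (simp add: bz algebra_simps)
    then show ?thesis by (simp add: qform_scale Dq_def sum_distrib_left mult_ac)
  qed
  also have "(\<Sum>i<n. \<Sum>j\<in>{..<n}-{i}. phr j x) = (real n - 1) * Px"
  proof -
    have "(\<Sum>i<n. \<Sum>j\<in>{..<n}-{i}. phr j x) = (\<Sum>i<n. Px - phr i x)"
      by (intro sum.cong refl) (simp add: Px_def sum_minus_i)
    then show ?thesis by (simp add: sum_subtractf Px_def algebra_simps)
  qed
  also have "(\<Sum>i<n. phr i z) \<le> alpha * Py + (1 - alpha) * Px - alpha * (1 - alpha) * \<mu> / 2 * Dq"
  proof -
    have "(\<Sum>i<n. phr i z) \<le> (\<Sum>i<n. alpha * phr i y + (1 - alpha) * phr i x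
      - alpha * (1 - alpha) * \<mu> / 2 * (L i * qq i (blk (S i) y - blk (S i) x)))"
      by (intro sum_mono) (use phz in \<open>simp add: mult_ac\<close>)
    also have "\<dots> = alpha * Py + (1 - alpha) * Px - alpha * (1 - alpha) * \<mu> / 2 * Dq"
      by (simp add: sum.distrib sum_subtractf sum_distrib_left Py_def Px_def Dq_def)
    finally show ?thesis .
  qed
  finally have main: "(\<Sum>i<n. Fmr (x + T i x)) \<le> real n * f x + alpha * (gf x \<bullet> (y - x)) + alpha^2 / 2 * Dq
      + (alpha * Py + (1 - alpha) * Px - alpha * (1 - alpha) * \<mu> / 2 * Dq) + (real n - 1) * Px"
    by simp
  have tan: "alpha * (gf x \<bullet> (y - x)) \<le> alpha * (f y - f x)"
    using f_tangent[where x=x and y=y] alpha(1) by (intro mult_left_mono) auto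
  have c: "alpha^2 / 2 * Dq = alpha * (1 - alpha) * \<mu> / 2 * Dq" using alpha(3) by simp
  have rhs: "(real n - alpha) * Fmr x + alpha * Fmr y
     = real n * f x + alpha * (f y - f x) + alpha * Py + (1 - alpha) * Px + (real n - 1) * Px"
    by (simp add: Fmr_def Px_def Py_def algebra_simps)
  show ?thesis unfolding rhs using main tan c by linarith
qed

end


context ucdc2 begin

abbreviation run where "run is \<equiv> ucdc_run gf L B S \<Phi> x0 is"

lemma run_snoc: "run (is @ [i]) = run is + T i (run is)"
  by (simp add: ucdc_run_def ucdc_step_def)

lemma run_Nil: "run [] = x0" by (simp add: ucdc_run_def)

lemma run_good: "good x0 \<Longrightarrow> set is \<subseteq> {..<n} \<Longrightarrow> good (run is)"
proof (induction "is" rule: rev_induct)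
  case Nil then show ?case by (simp add: run_Nil)
next
  case (snoc i "is")
  then show ?case by (simp add: run_snoc step_good)
qed

lemma n_pos: "n > 0"
  using part_cover[of undefined] by auto

lemma alpha_pos: "alpha > 0" "alpha < 1"
  using mu by (auto simp: alpha_def field_simps)

lemma choice_Suc: "choice_seqs n (Suc k) = (\<lambda>p. fst p @ [snd p]) ` (choice_seqs n k \<times> {..<n})"
proof
  show "choice_seqs n (Suc k) \<subseteq> (\<lambda>p. fst p @ [snd p]) ` (choice_seqs n k \<times> {..<n})"
  proof
    fix xs assume xs: "xs \<in> choice_seqs n (Suc k)"
    then have ne: "xs \<noteq> []" by (auto simp: choice_seqs_def)
    have eq: "xs = butlast xs @ [last xs]" using ne by simp
    have lx: "last xs \<in> set xs" using last_in_set[OF ne] .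
    have sx: "set xs \<subseteq> {..<n}" using xs by (simp add: choice_seqs_def)
    have "last xs < n" using sx lx by blast
    moreover have "set (butlast xs) \<subseteq> {..<n}" "length (butlast xs) = k"
      using xs ne by (auto simp: choice_seqs_def dest: in_set_butlastD)
    ultimately have "set (butlast xs) \<subseteq> {..<n}" "last xs < n" "length (butlast xs) = k" by auto
    then have "(butlast xs, last xs) \<in> choice_seqs n k \<times> {..<n}"
      by (auto simp: choice_seqs_def)
    then show "xs \<in> (\<lambda>p. fst p @ [snd p]) ` (choice_seqs n k \<times> {..<n})"
      using eq by (metis (no_types, lifting) fst_conv image_eqI snd_conv)
  qed
qed (auto simp: choice_seqs_def)

lemma choice_finite: "finite (choice_seqs n k)"
proof -
  have "choice_seqs n k = {xs. set xs \<subseteq> {..<n} \<and> length xs = k}" by (auto simp: choice_seqs_def)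
  then show ?thesis using finite_lists_length_eq[of "{..<n}" k] by simp
qed

lemma choice_card: "card (choice_seqs n k) = n ^ k"
proof -
  have "choice_seqs n k = {xs. set xs \<subseteq> {..<n} \<and> length xs = k}" by (auto simp: choice_seqs_def)
  then show ?thesis using card_lists_length_eq[of "{..<n}" k] by simp
qed

lemma choice_sum_Suc:
  "(\<Sum>xs\<in>choice_seqs n (Suc k). h xs) = (\<Sum>xs\<in>choice_seqs n k. \<Sum>i<n. h (xs @ [i]))"
proof -
  have inj: "inj_on (\<lambda>p. fst p @ [snd p]) (choice_seqs n k \<times> {..<n})"
    by (auto simp: inj_on_def)
  have "(\<Sum>xs\<in>choice_seqs n (Suc k). h xs) = (\<Sum>p\<in>choice_seqs n k \<times> {..<n}. h (fst p @ [snd p]))"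
    unfolding choice_Suc by (subst sum.reindex[OF inj]) simp
  also have "\<dots> = (\<Sum>xs\<in>choice_seqs n k. \<Sum>i<n. h (xs @ [i]))"
    by (simp add: sum.cartesian_product')
  finally show ?thesis .
qed

lemma expect_bound:
  assumes gx0: "good x0"
    and mlow: "\<And>y. good y \<Longrightarrow> m \<le> Fmr y"
    and mgr: "\<And>c. (\<And>y. good y \<Longrightarrow> c \<le> Fmr y) \<Longrightarrow> c \<le> m"
  shows "(\<Sum>xs\<in>choice_seqs n k. Fmr (run xs) - m) \<le> (real n - alpha) ^ k * (Fmr x0 - m)"
proof (induction k)
  case 0
  have "choice_seqs n 0 = {[]}" by (auto simp: choice_seqs_def)
  then show ?case by (simp add: run_Nil)
next
  case (Suc k)
  have step: "(\<Sum>i<n. Fmr (x + T i x) - m) \<le> (real n - alpha) * (Fmr x - m)" if gx: "good x" for x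
  proof -
    define c where "c = ((\<Sum>i<n. Fmr (x + T i x)) - (real n - alpha) * Fmr x) / alpha"
    have "c \<le> Fmr y" if "good y" for y
      using avg_step[OF gx that] alpha_pos by (simp add: c_def field_simps)
    then have "c \<le> m" by (rule mgr)
    then have "(\<Sum>i<n. Fmr (x + T i x)) \<le> (real n - alpha) * Fmr x + alpha * m"
      using alpha_pos by (simp add: c_def field_simps)
    then show ?thesis by (simp add: sum_subtractf algebra_simps)
  qed
  have nb: "real n - alpha \<ge> 0" using n_pos alpha_pos by (simp add: less_eq_real_def)
  have "(\<Sum>xs\<in>choice_seqs n (Suc k). Fmr (run xs) - m)
      = (\<Sum>xs\<in>choice_seqs n k. \<Sum>i<n. Fmr (run xs + T i (run xs)) - m)"
    by (simp add: choice_sum_Suc run_snoc)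
  also have "\<dots> \<le> (\<Sum>xs\<in>choice_seqs n k. (real n - alpha) * (Fmr (run xs) - m))"
    by (intro sum_mono step run_good[OF gx0]) (auto simp: choice_seqs_def)
  also have "\<dots> = (real n - alpha) * (\<Sum>xs\<in>choice_seqs n k. Fmr (run xs) - m)"
    by (simp add: sum_distrib_left)
  also have "\<dots> \<le> (real n - alpha) * ((real n - alpha) ^ k * (Fmr x0 - m))"
    by (intro mult_left_mono Suc.IH nb)
  finally show ?case by simp
qed

lemma markov_bound:
  assumes gx0: "good x0"
    and mlow: "\<And>y. good y \<Longrightarrow> m \<le> Fmr y"
    and mgr: "\<And>c. (\<And>y. good y \<Longrightarrow> c \<le> Fmr y) \<Longrightarrow> c \<le> m"
    and d: "d > 0"
  shows "real (card {xs\<in>choice_seqs n k. Fmr (run xs) - m > d}) * d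
      \<le> (real n - alpha) ^ k * (Fmr x0 - m)"
proof -
  let ?A = "{xs\<in>choice_seqs n k. Fmr (run xs) - m > d}"
  have "real (card ?A) * d = (\<Sum>xs\<in>?A. d)" by simp
  also have "\<dots> \<le> (\<Sum>xs\<in>?A. Fmr (run xs) - m)"
    by (intro sum_mono) auto
  also have "\<dots> \<le> (\<Sum>xs\<in>choice_seqs n k. Fmr (run xs) - m)"
    by (intro sum_mono2 choice_finite) (auto simp: choice_seqs_def intro!: mlow run_good[OF gx0])
  also have "\<dots> \<le> (real n - alpha) ^ k * (Fmr x0 - m)"
    by (rule expect_bound[OF gx0 mlow mgr])
  finally show ?thesis .
qed

end


lemma numeric:
  fixes nn \<mu> \<epsilon> \<rho> \<Delta> q :: real and k :: nat
  assumes n1: "nn \<ge> 1" and mu: "\<mu> > 0" "\<mu> \<le> 2" and eps: "\<epsilon> > 0" and rho: "\<rho> > 0"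
    and D: "\<Delta> \<ge> 0"
    and k: "real k \<ge> 4 * nn / \<mu> * ln (2 * \<Delta> / (\<rho> * \<epsilon>))"
    and q: "q = 1 - (\<mu> / (1 + \<mu>)) / nn"
  shows "q ^ k * (2 * \<Delta> / \<epsilon>) \<le> \<rho>"
proof -
  define a where "a = (\<mu> / (1 + \<mu>)) / nn"
  have a0: "a > 0" using mu n1 by (simp add: a_def)
  have a1: "a \<le> 1"
  proof -
    have "\<mu> / (1 + \<mu>) \<le> 1" using mu by simp
    then have "\<mu> / (1 + \<mu>) / nn \<le> 1 / nn" using n1 by (intro divide_right_mono) auto
    also have "\<dots> \<le> 1" using n1 by simp
    finally show ?thesis by (simp add: a_def)
  qed
  have qa: "q = 1 - a" using q by (simp add: a_def)
  have q0: "q \<ge> 0" "q \<le> 1" using qa a0 a1 by simp_all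
  have E0: "2 * \<Delta> / \<epsilon> \<ge> 0" using D eps by simp
  show ?thesis
  proof (cases "2 * \<Delta> / (\<rho> * \<epsilon>) \<le> 1")
    case True
    have "q ^ k \<le> 1" using q0 by (simp add: power_le_one)
    then have "q ^ k * (2 * \<Delta> / \<epsilon>) \<le> 2 * \<Delta> / \<epsilon>" using E0 mult_left_le_one_le[OF E0 _ \<open>q ^ k \<le> 1\<close>] q0 by simp
    also have "\<dots> \<le> \<rho>" using True rho eps by (simp add: field_simps)
    finally show ?thesis .
  next
    case False
    define A where "A = 2 * \<Delta> / (\<rho> * \<epsilon>)"
    have A1: "A > 1" using False by (simp add: A_def)
    have lnA: "ln A > 0" using A1 by simp
    have qe: "q \<le> exp (- a)" using exp_ge_add_one_self[of "- a"] qa by simp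
    have "q ^ k \<le> exp (- a) ^ k" using q0 qe by (simp add: power_mono)
    also have "\<dots> = exp (real k * (- a))" by (rule exp_of_nat_mult[symmetric])
    also have "\<dots> \<le> exp (- ln A)"
    proof -
      have "\<mu> / (1 + \<mu>) \<ge> \<mu> / 3" using mu by (intro divide_left_mono) auto
      then have "\<mu> / (1 + \<mu>) / nn \<ge> \<mu> / 3 / nn" using n1 by (intro divide_right_mono) auto
      then have "a \<ge> \<mu> / (3 * nn)" by (simp add: a_def)
      have kk: "real k \<ge> 4 * nn / \<mu> * ln A" using k by (simp add: A_def)
      have "real k * a \<ge> (4 * nn / \<mu> * ln A) * (\<mu> / (3 * nn))"
        using kk \<open>a \<ge> \<mu> / (3 * nn)\<close> lnA mu n1 by (intro mult_mono) auto
      also have "(4 * nn / \<mu> * ln A) * (\<mu> / (3 * nn)) = 4 / 3 * ln A" using mu n1 by (simp add: field_simps)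
      finally have "real k * a \<ge> ln A" using lnA by linarith
      then show ?thesis by simp
    qed
    also have "\<dots> = 1 / A" using A1 by (simp add: exp_minus inverse_eq_divide)
    finally have "q ^ k * (2 * \<Delta> / \<epsilon>) \<le> 1 / A * (2 * \<Delta> / \<epsilon>)" using mult_right_mono[OF _ E0] by (metis (no_types))
    also have "\<dots> = \<rho>" using A1 rho eps unfolding A_def by (auto simp: field_simps) (metis mult_pos_pos not_less_iff_gr_or_eq)
    finally show ?thesis .
  qed
qed



theorem theorem9:
  fixes n :: nat and S :: "nat \<Rightarrow> 'n::finite set"
    and B Binv :: "nat \<Rightarrow> real^'n^'n" and L :: "nat \<Rightarrow> real"
    and f :: "real^'n \<Rightarrow> real" and gf :: "real^'n \<Rightarrow> real^'n"
    and \<Psi> :: "nat \<Rightarrow> real^'n \<Rightarrow> ereal"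
    and F :: "real^'n \<Rightarrow> ereal"
    and xstar x0 :: "real^'n" and \<epsilon> \<rho> :: real and k :: nat
  assumes part: "block_partition n S"
    and Bpd: "\<forall>i<n. pos_def_on (S i) (B i)"
    and Binv: "\<forall>i<n. inverse_on (S i) (B i) (Binv i)"
    and Lpos: "\<forall>i<n. L i > 0"
    and fconv: "convex_on UNIV f"
    and fgrad: "\<forall>x. (f has_derivative (\<lambda>h. gf x \<bullet> h)) (at x)"
    and fLip: "\<forall>i<n. \<forall>x. \<forall>t\<in>blockspace (S i).
                 sqrt (qform (Binv i) (S i) (blk (S i) (gf (x + t)) - blk (S i) (gf x)))
                   \<le> L i * bnorm (B i) (S i) t"
    and \<Psi>pcc: "\<forall>i<n. proper_closed_convex_on (S i) (\<Psi> i)"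
    and F_def: "\<forall>x. F x = ereal (f x) + (\<Sum>i<n. \<Psi> i (blk (S i) x))"
    and xstar: "\<forall>y. F xstar \<le> F y"
    and Fx0: "F x0 < \<infinity>"
    and eps: "0 < \<epsilon>" "\<epsilon> \<le> 2 * (Lnorm n S B L (x0 - xstar))^2"
    and rho: "0 < \<rho>" "\<rho> < 1"
    and k: "real k \<ge> 4 * real n * (Lnorm n S B L (x0 - xstar))^2 / \<epsilon>
                       * ln (2 * real_of_ereal (F x0 - F xstar) / (\<rho> * \<epsilon>))"
  shows "let \<mu> = \<epsilon> / (Lnorm n S B L (x0 - xstar))^2;
             \<Phi> = (\<lambda>i t. \<Psi> i t + ereal (\<mu> / 2 * L i * (bnorm (B i) (S i) (t - blk (S i) x0))^2))
         in measure_pmf.prob (pmf_of_set (choice_seqs n k))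
              {is. F (ucdc_run gf L B S \<Phi> x0 is) - F xstar \<le> ereal \<epsilon>} \<ge> 1 - \<rho>"
proof -
  define Ln where "Ln = Lnorm n S B L (x0 - xstar)"
  define \<mu> where "\<mu> = \<epsilon> / Ln^2"
  define \<Phi> where "\<Phi> = (\<lambda>i t. \<Psi> i t + ereal (\<mu> / 2 * L i * (bnorm (B i) (S i) (t - blk (S i) x0))^2))"
  have Ln2: "Ln^2 > 0" using eps unfolding Ln_def[symmetric] by linarith
  have mu: "\<mu> > 0" "\<mu> \<le> 2" using Ln2 eps by (simp_all add: \<mu>_def Ln_def field_simps)
  interpret U: ucdc2 n S B Binv L f gf \<Psi> x0 \<mu> \<Phi>
    by unfold_locales (use part Bpd Binv Lpos fconv fgrad fLip \<Psi>pcc mu \<Phi>_def in auto)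
  define Fr where "Fr x = f x + (\<Sum>i<n. U.psr i x)" for x
  have F_good: "U.good x" if "F x \<noteq> \<infinity>" for x
  proof -
    have "(\<Sum>i<n. \<Psi> i (blk (S i) x)) \<noteq> \<infinity>" using that F_def by auto
    then show ?thesis unfolding U.good_def using sum_Pinfty by blast
  qed
  have F_Fr: "F x = ereal (Fr x)" if g: "U.good x" for x
    using F_def g by (simp add: U.good_Psi Fr_def)
  have Fmr_Fr: "U.Fmr x = Fr x + \<mu> / 2 * (\<Sum>i<n. L i * U.qq i (blk (S i) x - blk (S i) x0))" for x
    by (simp add: U.Fmr_def U.phr_def Fr_def sum.distrib sum_distrib_left mult_ac)
  have Fmr_ge: "U.Fmr x \<ge> Fr x" for x
  proof -
    have "(\<Sum>i<n. L i * U.qq i (blk (S i) x - blk (S i) x0)) \<ge> 0"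
      using Lpos by (intro sum_nonneg mult_nonneg_nonneg) (auto simp: less_imp_le intro: qform_nonneg U.pd_i)
    then show ?thesis using mu by (simp add: Fmr_Fr)
  qed
  have gx0: "U.good x0" using Fx0 F_good by simp
  have "F xstar < \<infinity>" by (rule le_less_trans[OF _ Fx0]) (use xstar in simp)
  then have gxs: "U.good xstar" using F_good by simp
  define Fs where "Fs = Fr xstar"
  have Fs_le: "Fs \<le> Fr y" if "U.good y" for y
  proof -
    have "F xstar \<le> F y" using xstar by simp
    then show ?thesis using F_Fr[OF that] F_Fr[OF gxs] by (simp add: Fs_def)
  qed
  have Fmr_x0: "U.Fmr x0 = Fr x0" by (simp add: Fmr_Fr qform_def)
  have Fmr_xs: "U.Fmr xstar = Fs + \<epsilon> / 2"
  proof -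
    have e: "U.qq i (blk (S i) xstar - blk (S i) x0) = (bnorm (B i) (S i) (blk (S i) (x0 - xstar)))^2"
      if i: "i < n" for i
    proof -
      have "blk (S i) xstar - blk (S i) x0 = (-1) *\<^sub>R blk (S i) (x0 - xstar)" by (simp add: blk_diff)
      then show ?thesis using qform_scale[of "B i" "S i" "-1" "blk (S i) (x0 - xstar)"]
        by (simp add: bnorm_sq[OF U.pd_i[OF i]])
    qed
    have nn: "(\<Sum>i<n. L i * (bnorm (B i) (S i) (blk (S i) (x0 - xstar)))^2) \<ge> 0"
      using Lpos by (intro sum_nonneg) (simp add: less_imp_le)
    have "Ln^2 = (\<Sum>i<n. L i * U.qq i (blk (S i) xstar - blk (S i) x0))"
      unfolding Ln_def Lnorm_def using nn by (simp add: e)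
    then have "U.Fmr xstar = Fr xstar + \<mu> / 2 * Ln^2" by (simp add: Fmr_Fr)
    moreover have "\<mu> / 2 * Ln^2 = \<epsilon> / 2" using Ln2 by (simp add: \<mu>_def)
    ultimately show ?thesis by (simp add: Fs_def)
  qed
  define m where "m = Inf (U.Fmr ` {y. U.good y})"
  have ne: "U.Fmr ` {y. U.good y} \<noteq> {}" using gx0 by auto
  have bdd: "bdd_below (U.Fmr ` {y. U.good y})"
    by (rule bdd_belowI[of _ Fs]) (use Fs_le Fmr_ge in \<open>auto intro: order_trans\<close>)
  have mlow: "m \<le> U.Fmr y" if "U.good y" for y
    unfolding m_def using that bdd by (intro cInf_lower) auto
  have mgr: "c \<le> m" if "\<And>y. U.good y \<Longrightarrow> c \<le> U.Fmr y" for c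
    unfolding m_def using that ne by (intro cInf_greatest) auto
  have m_ge: "m \<ge> Fs" using Fs_le Fmr_ge by (intro mgr) (meson order_trans)
  have m_le: "m \<le> Fs + \<epsilon> / 2" using mlow[OF gxs] Fmr_xs by simp
  define A where "A = choice_seqs n k"
  define Bad where "Bad = {xs\<in>A. U.Fmr (U.run xs) - m > \<epsilon> / 2}"
  have finA: "finite A" and neA: "A \<noteq> {}" and cardA: "card A = n ^ k"
  proof -
    show "finite A" using U.choice_finite by (simp add: A_def)
    show cA: "card A = n ^ k" using U.choice_card by (simp add: A_def)
    then have "card A \<noteq> 0" using U.n_pos by simp
    then show "A \<noteq> {}" by auto
  qed
  have mk: "real (card Bad) * (\<epsilon> / 2) \<le> (real n - U.alpha) ^ k * (U.Fmr x0 - m)"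
    unfolding Bad_def A_def using U.markov_bound[OF gx0 mlow mgr, of "\<epsilon> / 2"] eps by simp
  define \<Delta> where "\<Delta> = Fr x0 - Fs"
  have D0: "\<Delta> \<ge> 0" using Fs_le[OF gx0] by (simp add: \<Delta>_def)
  have Dre: "real_of_ereal (F x0 - F xstar) = \<Delta>"
    using F_Fr[OF gx0] F_Fr[OF gxs] by (simp add: \<Delta>_def Fs_def)
  have nb: "real n - U.alpha \<ge> 0" using U.n_pos U.alpha_pos by (simp add: less_eq_real_def)
  have "real (card Bad) * (\<epsilon> / 2) \<le> (real n - U.alpha) ^ k * \<Delta>"
  proof -
    have "U.Fmr x0 - m \<le> \<Delta>" using m_ge Fmr_x0 by (simp add: \<Delta>_def)
    then have "(real n - U.alpha) ^ k * (U.Fmr x0 - m) \<le> (real n - U.alpha) ^ k * \<Delta>"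
      using nb by (intro mult_left_mono) auto
    then show ?thesis using mk by linarith
  qed
  then have r1: "real (card Bad) \<le> (real n - U.alpha) ^ k * \<Delta> * 2 / \<epsilon>"
    using eps by (simp add: pos_le_divide_eq)
  have np: "real n > 0" using U.n_pos by simp
  have r2: "(1 - U.alpha / real n) ^ k = (real n - U.alpha) ^ k / real n ^ k"
  proof -
    have "1 - U.alpha / real n = (real n - U.alpha) / real n" using np by (simp add: diff_divide_distrib)
    then show ?thesis by (simp add: power_divide)
  qed
  have cb: "real (card Bad) / real (card A) \<le> (1 - U.alpha / real n) ^ k * (2 * \<Delta> / \<epsilon>)"
  proof -
    have "real (card Bad) / real (card A) \<le> ((real n - U.alpha) ^ k * \<Delta> * 2 / \<epsilon>) / real n ^ k"
      unfolding cardA of_nat_power using r1 np by (intro divide_right_mono) auto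
    also have "\<dots> = (1 - U.alpha / real n) ^ k * (2 * \<Delta> / \<epsilon>)" unfolding r2 by (simp add: mult_ac)
    finally show ?thesis .
  qed
  have kk: "4 * real n / \<mu> = 4 * real n * Ln^2 / \<epsilon>" using Ln2 eps by (simp add: \<mu>_def)
  have "(1 - U.alpha / real n) ^ k * (2 * \<Delta> / \<epsilon>) \<le> \<rho>"
  proof (rule numeric[where nn = "real n" and \<mu> = \<mu>])
    show "real k \<ge> 4 * real n / \<mu> * ln (2 * \<Delta> / (\<rho> * \<epsilon>))"
      unfolding kk Dre[symmetric] Ln_def using k .
    show "1 - U.alpha / real n = 1 - \<mu> / (1 + \<mu>) / real n" by (simp add: U.alpha_def)
    show "1 \<le> real n" using U.n_pos by simp
  qed (use mu eps rho D0 in auto)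
  then have cb': "real (card Bad) / real (card A) \<le> \<rho>" using cb by linarith
  note cb2 = cb'
  have sub: "A - Bad \<subseteq> A \<inter> {xs. F (U.run xs) - F xstar \<le> ereal \<epsilon>}"
  proof
    fix xs assume xs: "xs \<in> A - Bad"
    have g: "U.good (U.run xs)" using xs U.run_good[OF gx0] by (auto simp: A_def choice_seqs_def)
    have "U.Fmr (U.run xs) - m \<le> \<epsilon> / 2" using xs by (auto simp: Bad_def)
    then have "Fr (U.run xs) - Fs \<le> \<epsilon>" using Fmr_ge[of "U.run xs"] m_le by linarith
    then show "xs \<in> A \<inter> {xs. F (U.run xs) - F xstar \<le> ereal \<epsilon>}"
      using xs F_Fr[OF g] F_Fr[OF gxs] by (simp add: Fs_def)
  qed
  have BadA: "Bad \<subseteq> A" by (auto simp: Bad_def)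
  have "1 - \<rho> \<le> 1 - real (card Bad) / real (card A)" using cb2 by simp
  also have "\<dots> = real (card (A - Bad)) / real (card A)"
  proof -
    have cBA: "card Bad \<le> card A" using finA BadA by (rule card_mono)
    have "card (A - Bad) = card A - card Bad" using finA BadA by (simp add: card_Diff_subset finite_subset)
    then have "real (card (A - Bad)) = real (card A) - real (card Bad)" using cBA by simp
    moreover have "real (card A) > 0" using neA finA by (simp add: card_gt_0_iff)
    ultimately show ?thesis by (simp add: diff_divide_distrib)
  qed
  also have "\<dots> \<le> real (card (A \<inter> {xs. F (U.run xs) - F xstar \<le> ereal \<epsilon>})) / real (card A)"
    using sub finA by (intro divide_right_mono) (auto intro: card_mono)
  also have "\<dots> = measure_pmf.prob (pmf_of_set A) {xs. F (U.run xs) - F xstar \<le> ereal \<epsilon>}"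
    by (rule measure_pmf_of_set[OF neA finA, symmetric])
  finally have main: "measure_pmf.prob (pmf_of_set A) {xs. F (U.run xs) - F xstar \<le> ereal \<epsilon>} \<ge> 1 - \<rho>" .
  show ?thesis using main unfolding Let_def A_def \<Phi>_def \<mu>_def Ln_def .
qed


end
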